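(* For every $\mu>0$ there exists a set $F_*\in\mathcal K$ with $|F_*|=\mu$ such that $P_S(F_* )\le P_S(F)$ for every $F\in\mathcal K$ with $|F|=\mu$.
   Context: Fix $n\ge 2$ and $s\in(0,1)$. Write $x=(x_1,x')\in\mathbb R\times\mathbb R^{n-1}$, $e_1=(1,0,\dots,0)$, and let $S:=[-1/2,1/2]\times\mathbb R^{n-1}$. Define the kernel $K(x):=\sum_{k\in\mathbb Z}|x+ke_1|^{-n-s}$ (with values in $(0,+\infty]$), and for a measurable $E\subseteq\mathbb R^n$ set $P_S(E):=\int_{E\cap S}\int_{S\setminus E}K(x-y)\,dx\,dy$. The class $\mathcal K$ consists of all sets $F=\{(x_1,x')\in S: |x'|\le f(x_1)\}$ where $f:[-1/2,1/2]\to[0,+\infty]$ is even and non-increasing on $[0,1/2]$. $|\cdot|$ denotes Lebesgue measure. *)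

theory Defs
  imports "HOL-Analysis.Analysis"
begin

text \<open>Points of R^n are written as pairs (x1, x') with x' in an abstract Euclidean
space 'a of dimension n-1 = DIM('a) >= 1, so n = DIM('a) + 1 >= 2 automatically.\<close>

definition dimn :: "'a::euclidean_space itself \<Rightarrow> real" where
  "dimn _ = real DIM('a) + 1"

definition strip :: "(real \<times> 'a::euclidean_space) set" where
  "strip = {x. fst x \<in> {-1/2..1/2}}"

definition kterm :: "real \<Rightarrow> real \<times> 'a::euclidean_space \<Rightarrow> ennreal" where
  "kterm s x = (if x = 0 then \<infinity> else ennreal (norm x powr (- (dimn TYPE('a) + s))))"

definition kernel :: "real \<Rightarrow> real \<times> 'a::euclidean_space \<Rightarrow> ennreal" where
  "kernel s x = (\<Sum>\<^sub>\<infinity>k::int. kterm s (x + (of_int k, 0)))"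

definition PS :: "real \<Rightarrow> (real \<times> 'a::euclidean_space) set \<Rightarrow> ennreal" where
  "PS s E = (\<integral>\<^sup>+ y. indicator (E \<inter> strip) y *
              (\<integral>\<^sup>+ x. indicator (strip - E) x * kernel s (x - y) \<partial>lebesgue) \<partial>lebesgue)"

definition classK :: "(real \<times> 'a::euclidean_space) set set" where
  "classK = {F. \<exists>f :: real \<Rightarrow> ereal.
      (\<forall>t\<in>{-1/2..1/2}. 0 \<le> f t \<and> f (-t) = f t) \<and>
      (\<forall>a b. 0 \<le> a \<longrightarrow> a \<le> b \<longrightarrow> b \<le> 1/2 \<longrightarrow> f b \<le> f a) \<and>
      F = {x. fst x \<in> {-1/2..1/2} \<and> ereal (norm (snd x)) \<le> f (fst x)}}"

end

theory Submission
  imports Defs "HOL-Library.Diagonal_Subsequence"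
begin


definition KS :: "(real \<Rightarrow> ereal) \<Rightarrow> (real \<times> 'a::euclidean_space) set" where
  "KS g = {x. \<bar>fst x\<bar> \<le> 1/2 \<and> ereal (norm (snd x)) \<le> g \<bar>fst x\<bar>}"

definition adm :: "(real \<Rightarrow> ereal) \<Rightarrow> bool" where
  "adm g \<longleftrightarrow> (\<forall>t\<ge>0. 0 \<le> g t) \<and> (\<forall>a b. 0 \<le> a \<longrightarrow> a \<le> b \<longrightarrow> g b \<le> g a)"

lemma classK_KS:
  assumes "F \<in> (classK :: (real \<times> 'a::euclidean_space) set set)"
  shows "\<exists>g. adm g \<and> F = KS g"
proof -
  obtain f :: "real \<Rightarrow> ereal" where f1: "\<forall>t\<in>{-1/2..1/2}. 0 \<le> f t \<and> f (-t) = f t"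
    and f2: "\<forall>a b. 0 \<le> a \<longrightarrow> a \<le> b \<longrightarrow> b \<le> 1/2 \<longrightarrow> f b \<le> f a"
    and F: "F = {x. fst x \<in> {-1/2..1/2} \<and> ereal (norm (snd x)) \<le> f (fst x)}"
    using assms unfolding classK_def by blast
  define g where "g t = f (max 0 (min t (1/2)))" for t
  have "adm g" unfolding adm_def g_def
    using f1 f2 by (auto simp: max_def min_def)
  moreover have "F = KS g"
  proof -
    have "f t = g \<bar>t\<bar>" if "t \<in> {-1/2..1/2}" for t
      using that f1 unfolding g_def by (cases "t \<ge> 0") (auto simp: max_def min_def)
    moreover have "fst x \<in> {-1/2..1/2} \<longleftrightarrow> \<bar>fst x\<bar> \<le> 1/2" for x :: "real \<times> 'a"
      by auto
    ultimately show ?thesis unfolding F KS_def by (metis (no_types, lifting))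
  qed
  ultimately show ?thesis by blast
qed

lemma KS_classK:
  assumes "adm g"
  shows "KS g \<in> (classK :: (real \<times> 'a::euclidean_space) set set)"
  unfolding classK_def
proof (intro CollectI exI[of _ "\<lambda>t. g \<bar>t\<bar>"] conjI)
  show "\<forall>t\<in>{- 1 / 2..1 / 2}. 0 \<le> g \<bar>t\<bar> \<and> g \<bar>- t\<bar> = g \<bar>t\<bar>"
    using assms unfolding adm_def by auto
  show "\<forall>a b. 0 \<le> a \<longrightarrow> a \<le> b \<longrightarrow> b \<le> 1 / 2 \<longrightarrow> g \<bar>b\<bar> \<le> g \<bar>a\<bar>"
    using assms unfolding adm_def by auto
  show "KS g = {x. fst x \<in> {- 1 / 2..1 / 2} \<and> ereal (norm (snd x)) \<le> g \<bar>fst x\<bar>}"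
    unfolding KS_def by (auto simp: abs_le_iff)
qed

lemma antimono_borel:
  fixes G :: "real \<Rightarrow> ereal"
  assumes "\<And>a b. a \<le> b \<Longrightarrow> G b \<le> G a"
  shows "G \<in> borel_measurable borel"
proof (rule borel_measurableI_greater)
  fix y
  have "is_interval {t. y < G t}"
    unfolding is_interval_1 using assms by (auto intro: less_le_trans)
  then show "{x \<in> space borel. y < G x} \<in> sets borel"
    using real_interval_borel_measurable by simp
qed

lemma adm_ext_borel:
  assumes "adm g"
  shows "(\<lambda>t. g (max 0 t)) \<in> borel_measurable borel"
  by (rule antimono_borel) (use assms in \<open>auto simp: adm_def\<close>)

lemma KS_alt: "KS g = {x. \<bar>fst x\<bar> \<le> 1/2 \<and> ereal (norm (snd x)) \<le> (\<lambda>t. g (max 0 t)) \<bar>fst x\<bar>}"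
  unfolding KS_def by (simp add: max_def)

lemma KS_borel:
  assumes "adm g"
  shows "(KS g :: (real \<times> 'a::euclidean_space) set) \<in> sets borel"
proof -
  define G where "G = (\<lambda>t. g (max 0 t))"
  have [measurable]: "G \<in> borel_measurable borel"
    unfolding G_def by (rule adm_ext_borel[OF assms])
  have "{x\<in>space (borel \<Otimes>\<^sub>M borel). \<bar>fst x\<bar> \<le> (1::real)/2 \<and> ereal (norm (snd x::'a)) \<le> G \<bar>fst x\<bar>} \<in> sets (borel \<Otimes>\<^sub>M borel)"
    by measurable
  then have "{x::real \<times> 'a. \<bar>fst x\<bar> \<le> 1/2 \<and> ereal (norm (snd x)) \<le> G \<bar>fst x\<bar>} \<in> sets (borel \<Otimes>\<^sub>M borel)"
    by (simp add: space_pair_measure)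
  moreover have "KS g = {x::real \<times> 'a. \<bar>fst x\<bar> \<le> 1/2 \<and> ereal (norm (snd x)) \<le> G \<bar>fst x\<bar>}"
    unfolding KS_def G_def by auto
  ultimately show ?thesis by (metis borel_prod)
qed

lemma KS_strip: "KS g \<subseteq> strip"
  unfolding KS_def strip_def by (auto simp: abs_le_iff)



lemma emeasure_times:
  assumes "A \<in> sets borel" "B \<in> sets borel"
  shows "emeasure lborel (A \<times> (B::'a::euclidean_space set)) = emeasure lborel (A::real set) * emeasure lborel B"
proof -
  have "emeasure (lborel \<Otimes>\<^sub>M lborel) (A \<times> B) = emeasure lborel A * emeasure lborel B"
    using assms by (intro lborel.emeasure_pair_measure_Times) auto
  then show ?thesis by (simp add: lborel_prod)
qed

lemma null_by_sections:
  assumes X: "(X :: (real \<times> 'a::euclidean_space) set) \<in> sets borel"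
    and sec: "\<And>t. emeasure lborel (Pair t -` X) = 0"
  shows "emeasure lborel X = 0"
proof -
  have "X \<in> sets (lborel \<Otimes>\<^sub>M lborel)" using X by (metis borel_prod sets_lborel sets_pair_measure_cong)
  then have "emeasure (lborel \<Otimes>\<^sub>M lborel) X = (\<integral>\<^sup>+ t. emeasure lborel (Pair t -` X) \<partial>lborel)"
    by (rule lborel.emeasure_pair_measure_alt)
  also have "\<dots> = 0" using sec by simp
  finally show ?thesis by (simp add: lborel_prod)
qed

lemma null_fst:
  assumes "countable C"
  shows "emeasure lborel {y::real \<times> 'a::euclidean_space. fst y \<in> C} = 0"
proof -
  have C: "C \<in> sets borel" using assms by (simp add: sets.countable)
  have "{y::real \<times> 'a. fst y \<in> C} = C \<times> UNIV" by auto
  moreover have "emeasure lborel C = 0"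
    using assms by (simp add: emeasure_lborel_countable)
  ultimately show ?thesis using emeasure_times[OF C, of UNIV] by simp
qed

lemma null_sphere:
  fixes h :: "real \<Rightarrow> ereal"
  assumes [measurable]: "h \<in> borel_measurable borel"
  shows "emeasure lborel {y::real \<times> 'a::euclidean_space. ereal (norm (snd y)) = h (fst y)} = 0"
proof (rule null_by_sections)
  have "{y\<in>space (borel \<Otimes>\<^sub>M borel). ereal (norm (snd y::'a)) = h (fst y :: real)} \<in> sets (borel \<Otimes>\<^sub>M borel)"
    by measurable
  then show "{y::real \<times> 'a. ereal (norm (snd y)) = h (fst y)} \<in> sets borel"
    by (metis (no_types, lifting) borel_prod space_borel UNIV_I Collect_cong space_pair_measure UNIV_Times_UNIV)
  fix t
  show "emeasure lborel (Pair t -` {y::real \<times> 'a. ereal (norm (snd y)) = h (fst y)}) = 0"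
  proof (cases "h t")
    case (real c)
    have "Pair t -` {y::real \<times> 'a. ereal (norm (snd y)) = h (fst y)} = sphere 0 c"
      using real by (auto simp: sphere_def)
    moreover have "sphere (0::'a) c \<in> null_sets lborel"
      using negligible_sphere[of "0::'a" c]
      by (auto simp: null_sets_completion_iff negligible_iff_null_sets negligible_convex_frontier)
    ultimately show ?thesis by auto
  qed auto
qed

lemma lebesgue_eq_lborel:
  assumes "A \<in> sets borel"
  shows "emeasure lebesgue A = emeasure lborel A"
  using assms by simp



lemma kterm_borel[measurable]: "kterm s \<in> borel_measurable (borel :: (real \<times> 'a::euclidean_space) measure)"
  unfolding kterm_def by measurable

lemma kernel_SUP: "kernel s x = (SUP F\<in>{F. finite F}. \<Sum>k\<in>F. kterm s (x + (of_int k, 0)))"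
  unfolding kernel_def by (subst nonneg_infsum_complete) auto

lemma kernel_borel[measurable]: "kernel s \<in> borel_measurable (borel :: (real \<times> 'a::euclidean_space) measure)"
proof -
  have "(\<lambda>x::real\<times>'a. SUP F\<in>{F::int set. finite F}. \<Sum>k\<in>F. kterm s (x + (of_int k, 0))) \<in> borel_measurable borel"
    by (rule borel_measurable_SUP) (auto simp: countable_Collect_finite)
  then show ?thesis by (simp add: kernel_SUP[abs_def])
qed

lemma kernel_ge_kterm: "kterm s x \<le> kernel s x"
proof -
  have "kterm s x = (\<Sum>k\<in>{0::int}. kterm s (x + (of_int k, 0)))" by (simp add: zero_prod_def[symmetric])
  also have "\<dots> \<le> kernel s x" unfolding kernel_SUP by (rule SUP_upper) auto
  finally show ?thesis .
qed

lemma PS_lborel: "PS s E = (\<integral>\<^sup>+ y. indicator (E \<inter> strip) y *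
              (\<integral>\<^sup>+ x. indicator (strip - E) x * kernel s (x - y) \<partial>lborel) \<partial>lborel)"
  unfolding PS_def nn_integral_completion ..

lemma strip_borel[measurable]: "strip \<in> sets (borel :: (real \<times> 'a::euclidean_space) measure)"
proof -
  have "{x\<in>space (borel \<Otimes>\<^sub>M borel). fst x \<in> {-1/2..1/2::real} \<and> snd x \<in> (UNIV::'a set)} \<in> sets (borel \<Otimes>\<^sub>M borel)"
    by measurable
  moreover have "strip = {x\<in>space (borel \<Otimes>\<^sub>M borel). fst x \<in> {-1/2..1/2::real} \<and> snd x \<in> (UNIV::'a set)}"
    unfolding strip_def by (auto simp: space_pair_measure)
  ultimately show ?thesis by (metis borel_prod)
qed

lemma inner_borel:
  assumes [measurable]: "A \<in> sets (borel :: (real \<times> 'a::euclidean_space) measure)"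
  shows "(\<lambda>y::real \<times> 'a. \<integral>\<^sup>+ x. indicator A x * kernel s (x - y) \<partial>lborel) \<in> borel_measurable borel"
proof -
  have "(\<lambda>p::(real \<times> 'a) \<times> (real \<times> 'a). indicator A (snd p) * kernel s (snd p - fst p)) \<in> borel_measurable (borel \<Otimes>\<^sub>M borel)"
    by measurable
  then have "(\<lambda>p::(real \<times> 'a) \<times> (real \<times> 'a). indicator A (snd p) * kernel s (snd p - fst p)) \<in> borel_measurable (lborel \<Otimes>\<^sub>M lborel)"
    by (simp add: measurable_def space_pair_measure sets_pair_measure_cong[OF sets_lborel sets_lborel])
  from lborel.borel_measurable_nn_integral_fst[OF this] show ?thesis by simp
qed



lemma small_cyl:
  fixes g :: "real \<Rightarrow> ereal"
  assumes g: "adm g" and R: "R > 0" and L: "0 < L" "L \<le> 1/4"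
    and meas: "emeasure lborel (KS g :: (real \<times> 'a::euclidean_space) set)
                 \<le> ennreal (2*L*unit_ball_vol (real DIM('a))*R^DIM('a))"
    and t: "t > L" and r: "r \<ge> R"
  shows "g t < ereal r"
proof (rule ccontr)
  assume "\<not> g t < ereal r"
  then have rg: "ereal r \<le> g t" by simp
  define t' where "t' = min t (1/2)"
  have t': "L < t'" "t' \<le> t" "t' \<le> 1/2" using t L unfolding t'_def by auto
  define V where "V = unit_ball_vol (real DIM('a))"
  have V: "V > 0" unfolding V_def by simp
  have sub: "{-t'..t'} \<times> ball (0::'a) r \<subseteq> KS g"
  proof
    fix x :: "real \<times> 'a" assume "x \<in> {-t'..t'} \<times> ball 0 r"
    then have x: "\<bar>fst x\<bar> \<le> t'" "norm (snd x) < r" by (auto simp: dist_norm)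
    have "g t \<le> g \<bar>fst x\<bar>" using g x t' unfolding adm_def by auto
    then have "ereal (norm (snd x)) \<le> g \<bar>fst x\<bar>" using rg x by (meson ereal_less_eq(3) less_imp_le order_trans)
    then show "x \<in> KS g" using x t' unfolding KS_def by auto
  qed
  have "emeasure lborel ({-t'..t'} \<times> ball (0::'a) r) = ennreal (2*t') * ennreal (V * r^DIM('a))"
    using t' L R r by (subst emeasure_times) (auto simp: emeasure_ball V_def)
  also have "\<dots> = ennreal (2*t'*V*r^DIM('a))"
    using t' L by (simp add: ennreal_mult'[symmetric] mult.assoc)
  finally have "ennreal (2*t'*V*r^DIM('a)) \<le> emeasure lborel (KS g :: (real \<times> 'a) set)"
    using emeasure_mono[OF sub] KS_borel[OF g] by (metis sets_lborel)
  then have "ennreal (2*t'*V*r^DIM('a)) \<le> ennreal (2*L*V*R^DIM('a))"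
    using meas unfolding V_def by (meson order_trans)
  then have le: "2*t'*V*r^DIM('a) \<le> 2*L*V*R^DIM('a)"
    using L R V by (subst (asm) ennreal_le_iff) auto
  have "R^DIM('a) \<le> r^DIM('a)" using R r by (intro power_mono) auto
  moreover have "R^DIM('a) > 0" using R by simp
  ultimately have "2*L*V*R^DIM('a) < 2*t'*V*r^DIM('a)"
  proof -
    assume a1: "R^DIM('a) \<le> r^DIM('a)" and a2: "R^DIM('a) > 0"
    have A: "2*L*V < 2*t'*V" using t' V by simp
    show ?thesis using mult_less_le_imp_less[OF A a1] V L a2 by simp
  qed
  with le show False by simp
qed

lemma lower_J:
  fixes g :: "real \<Rightarrow> ereal" and y :: "real \<times> 'a::euclidean_space"
  assumes g: "adm g" and R: "R > 0" and L: "0 < L" "L \<le> 1/4" and s: "0 < s"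
    and meas: "emeasure lborel (KS g :: (real \<times> 'a) set)
                 \<le> ennreal (2*L*unit_ball_vol (real DIM('a))*R^DIM('a))"
    and y: "y \<in> KS g" and yR: "norm (snd y) > R"
  shows "ennreal ((6*L) powr (-(dimn TYPE('a) + s)) * (L * (unit_ball_vol (real DIM('a)) * (L/2)^DIM('a))))
         \<le> (\<integral>\<^sup>+ x. indicator (strip - KS g) x * kernel s (x - y) \<partial>lborel)"
proof -
  define e where "e = dimn TYPE('a) + s"
  have e: "e > 0" unfolding e_def dimn_def using s by simp
  define V where "V = unit_ball_vol (real DIM('a))"
  have V: "V > 0" unfolding V_def by simp
  define r where "r = norm (snd y)"
  have r: "r > R" using yR r_def by simp
  define u where "u = (1/r) *\<^sub>R snd y"
  have y0: "snd y \<noteq> 0" using r R r_def by auto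
  have nu: "norm u = 1" using r R y0 unfolding u_def r_def by simp
  have yu: "inner (snd y) u = r" using r R unfolding u_def r_def by (simp add: power2_norm_eq_inner[symmetric] power2_eq_square)
  have yL: "\<bar>fst y\<bar> \<le> L"
  proof (rule ccontr)
    assume "\<not> \<bar>fst y\<bar> \<le> L"
    then have "g \<bar>fst y\<bar> < ereal r" using small_cyl[OF g R L meas, of "\<bar>fst y\<bar>" r] r by simp
    moreover have "ereal r \<le> g \<bar>fst y\<bar>" using y unfolding KS_def r_def by simp
    ultimately show False by simp
  qed
  define c where "c = snd y + (2*L) *\<^sub>R u"
  define Q where "Q = {L<..2*L} \<times> ball c (L/2)"
  define k where "k = (6*L) powr (-e)"
  have pt: "ennreal k * indicator Q x \<le> indicator (strip - KS g) x * kernel s (x - y)" for x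
  proof (cases "x \<in> Q")
    case True
    then have x1: "L < fst x" "fst x \<le> 2*L" and x2: "norm (snd x - c) < L/2"
      unfolding Q_def by (auto simp: dist_norm norm_minus_commute)
    have eq1: "inner (snd x) u = inner c u + inner (snd x - c) u" by (simp add: inner_diff_left)
    have eq2: "inner c u = r + 2*L" unfolding c_def using nu yu by (simp add: inner_add_left power2_norm_eq_inner[symmetric])
    have ge: "inner (snd x - c) u \<ge> - norm (snd x - c)"
    proof -
      have "inner (c - snd x) u = - inner (snd x - c) u" by (simp add: inner_diff_left)
      moreover have "inner (c - snd x) u \<le> norm (snd x - c)"
        using norm_cauchy_schwarz[of "c - snd x" u] nu by (simp add: norm_minus_commute)
      ultimately show ?thesis by linarith
    qed
    have "inner (snd x) u \<ge> r + 2*L - norm (snd x - c)" using eq1 eq2 ge by linarith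
    moreover have "inner (snd x) u \<le> norm (snd x)" using norm_cauchy_schwarz[of "snd x" u] nu by simp
    ultimately have nx: "norm (snd x) > r" using x2 L by simp
    have "g \<bar>fst x\<bar> < ereal r" using small_cyl[OF g R L meas, of "\<bar>fst x\<bar>" r] r x1 by simp
    with nx have "x \<notin> KS g" unfolding KS_def by (auto simp: not_le intro: order.strict_trans)
    moreover have "x \<in> strip" unfolding strip_def using x1 L by auto
    ultimately have ind: "indicator (strip - KS g) x = (1::ennreal)" by simp
    have xy: "x - y \<noteq> 0" using x1 yL by auto
    have n1: "norm (x - y) \<le> norm (fst x - fst y) + norm (snd x - snd y)"
    proof -
      have "x - y = (fst x - fst y, snd x - snd y)" by (simp add: prod_eq_iff)
      then show ?thesis using norm_Pair_le[of "fst x - fst y" "snd x - snd y"] by simp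
    qed
    have n2: "norm (fst x - fst y) \<le> 3*L" using x1 yL by auto
    have n3: "norm (snd x - snd y) \<le> norm (snd x - c) + 2*L"
    proof -
      have "snd x - snd y = (snd x - c) + (2*L) *\<^sub>R u" unfolding c_def by simp
      then have "norm (snd x - snd y) \<le> norm (snd x - c) + norm ((2*L) *\<^sub>R u)" by (metis norm_triangle_ineq)
      then show ?thesis using nu L by simp
    qed
    have nxy: "norm (x - y) \<le> 6*L" using n1 n2 n3 x2 L(1) by linarith
    have "k \<le> norm (x - y) powr (-e)"
      unfolding k_def using e xy nxy by (intro powr_mono2') auto
    then have "ennreal k \<le> kterm s (x - y)" unfolding kterm_def e_def using xy by simp
    also have "\<dots> \<le> kernel s (x - y)" by (rule kernel_ge_kterm)
    finally show ?thesis using True ind by simp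
  qed simp
  have "Q \<in> sets (borel \<Otimes>\<^sub>M borel)" unfolding Q_def by (intro pair_measureI) auto
  then have Qm: "Q \<in> sets lborel" by (metis borel_prod sets_lborel)
  have "emeasure lborel Q = ennreal L * ennreal (V * (L/2)^DIM('a))"
    unfolding Q_def using L by (subst emeasure_times) (auto simp: emeasure_ball V_def)
  also have "\<dots> = ennreal (L * (V * (L/2)^DIM('a)))" using L V by (simp add: ennreal_mult')
  finally have EQ: "emeasure lborel Q = ennreal (L * (V * (L/2)^DIM('a)))" .
  have k0: "k \<ge> 0" unfolding k_def by simp
  have X0: "L * (V * (L/2)^DIM('a)) \<ge> 0" using L V by simp
  have "ennreal (k * (L * (V * (L/2)^DIM('a)))) = ennreal k * emeasure lborel Q"
    unfolding EQ using k0 X0 by (simp add: ennreal_mult)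
  also have "\<dots> = (\<integral>\<^sup>+ x. ennreal k * indicator Q x \<partial>lborel)"
    using Qm by (simp add: nn_integral_cmult_indicator)
  also have "\<dots> \<le> (\<integral>\<^sup>+ x. indicator (strip - KS g) x * kernel s (x - y) \<partial>lborel)"
    by (intro nn_integral_mono pt)
  finally show ?thesis unfolding k_def e_def V_def .
qed

lemma PS_tail:
  fixes g :: "real \<Rightarrow> ereal"
  assumes g: "adm g" and R: "R > 0" and L: "0 < L" "L \<le> 1/4" and s: "0 < s"
    and meas: "emeasure lborel (KS g :: (real \<times> 'a::euclidean_space) set)
                 \<le> ennreal (2*L*unit_ball_vol (real DIM('a))*R^DIM('a))"
  shows "ennreal ((6*L) powr (-(dimn TYPE('a) + s)) * (L * (unit_ball_vol (real DIM('a)) * (L/2)^DIM('a))))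
           * emeasure lborel (KS g \<inter> {y::real \<times> 'a. R < norm (snd y)}) \<le> PS s (KS g :: (real \<times> 'a) set)"
proof -
  define C where "C = ennreal ((6*L) powr (-(dimn TYPE('a) + s)) * (L * (unit_ball_vol (real DIM('a)) * (L/2)^DIM('a))))"
  have T: "KS g \<inter> {y::real \<times> 'a. R < norm (snd y)} \<in> sets lborel"
  proof -
    have "{y\<in>space (borel \<Otimes>\<^sub>M borel). R < norm (snd y :: 'a) \<and> fst y \<in> (UNIV::real set)} \<in> sets (borel \<Otimes>\<^sub>M borel)"
      by measurable
    then have "{y::real \<times> 'a. R < norm (snd y)} \<in> sets borel"
      by (metis (no_types, lifting) borel_prod space_borel UNIV_I Collect_cong space_pair_measure UNIV_Times_UNIV)
    moreover have "KS g \<in> sets (borel :: (real \<times> 'a) measure)" by (rule KS_borel[OF g])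
    ultimately show ?thesis by (metis sets.Int sets_lborel)
  qed
  have "C * emeasure lborel (KS g \<inter> {y::real \<times> 'a. R < norm (snd y)}) =
        (\<integral>\<^sup>+ y. C * indicator (KS g \<inter> {y::real \<times> 'a. R < norm (snd y)}) y \<partial>lborel)"
    using T by (simp add: nn_integral_cmult_indicator)
  also have "\<dots> \<le> (\<integral>\<^sup>+ y. indicator (KS g \<inter> strip) (y::real \<times> 'a) *
              (\<integral>\<^sup>+ x. indicator (strip - KS g) x * kernel s (x - y) \<partial>lborel) \<partial>lborel)"
  proof (rule nn_integral_mono)
    fix y :: "real \<times> 'a"
    show "C * indicator (KS g \<inter> {y. R < norm (snd y)}) y \<le> indicator (KS g \<inter> strip) y *
              (\<integral>\<^sup>+ x. indicator (strip - KS g) x * kernel s (x - y) \<partial>lborel)"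
    proof (cases "y \<in> KS g \<and> R < norm (snd y)")
      case True
      then have "y \<in> KS g \<inter> strip" using KS_strip by auto
      then show ?thesis using True lower_J[OF g R L s meas, of y] unfolding C_def by simp
    qed auto
  qed
  finally show ?thesis unfolding C_def PS_lborel by simp
qed



lemma fst_null_sets:
  assumes "countable C"
  shows "{y::real \<times> 'a::euclidean_space. fst y \<in> C} \<in> null_sets lborel"
proof (rule null_setsI)
  show "emeasure lborel {y::real \<times> 'a. fst y \<in> C} = 0" by (rule null_fst[OF assms])
  have C[measurable]: "C \<in> sets borel" using assms by (simp add: sets.countable)
  have "{y\<in>space (borel \<Otimes>\<^sub>M borel). fst y \<in> C \<and> snd y \<in> (UNIV::'a set)} \<in> sets (borel \<Otimes>\<^sub>M borel)"
    by measurable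
  then show "{y::real \<times> 'a. fst y \<in> C} \<in> sets lborel"
    by (metis (no_types, lifting) borel_prod sets_lborel space_borel UNIV_I Collect_cong space_pair_measure UNIV_Times_UNIV)
qed

lemma sphere_null_sets:
  fixes h :: "real \<Rightarrow> ereal"
  assumes [measurable]: "h \<in> borel_measurable borel"
  shows "{y::real \<times> 'a::euclidean_space. ereal (norm (snd y)) = h (fst y)} \<in> null_sets lborel"
proof (rule null_setsI)
  show "emeasure lborel {y::real \<times> 'a. ereal (norm (snd y)) = h (fst y)} = 0" by (rule null_sphere) simp
  have "{y\<in>space (borel \<Otimes>\<^sub>M borel). ereal (norm (snd y::'a)) = h (fst y :: real)} \<in> sets (borel \<Otimes>\<^sub>M borel)"
    by measurable
  then show "{y::real \<times> 'a. ereal (norm (snd y)) = h (fst y)} \<in> sets lborel"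
    by (metis (no_types, lifting) borel_prod sets_lborel space_borel UNIV_I Collect_cong space_pair_measure UNIV_Times_UNIV)
qed

lemma compact_adm:
  fixes g :: "nat \<Rightarrow> real \<Rightarrow> ereal"
  assumes g: "\<And>k. adm (g k)"
  shows "\<exists>\<sigma> f. strict_mono \<sigma> \<and> adm f \<and>
     (AE y in lborel. eventually (\<lambda>k. y \<in> (KS (g (\<sigma> k)) :: (real \<times> 'a::euclidean_space) set) \<longleftrightarrow> y \<in> KS f) sequentially)"
proof -
  obtain m :: "real \<Rightarrow> nat" where "bij_betw m \<rat> UNIV"
    using countable_rat Rats_infinite by (erule countableE_infinite)
  then obtain r :: "nat \<Rightarrow> real" where bij: "bij_betw r UNIV \<rat>"
    using bij_betw_inv by blast
  have r_onto: "\<exists>n. r n = q" if "q \<in> \<rat>" for q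
    using bij that unfolding bij_betw_def by (metis rangeE)
  let ?P = "\<lambda>n. \<lambda>s. convergent (\<lambda>k. g (s k) (r n))"
  interpret nat: subseqs ?P
  proof (unfold convergent_def, unfold subseqs_def, auto)
    fix n :: nat and s :: "nat \<Rightarrow> nat" assume s: "strict_mono s"
    obtain l r' where "strict_mono r'" "((\<lambda>k. g (s k) (r n)) \<circ> r') \<longlonglongrightarrow> l"
      using compact_complete_linorder[of "\<lambda>k. g (s k) (r n)"] by blast
    thus "\<exists>s'. strict_mono (s'::nat\<Rightarrow>nat) \<and> (\<exists>l. (\<lambda>k. g (s (s' k)) (r n)) \<longlonglongrightarrow> l)"
      by (auto simp: comp_def)
  qed
  define d where "d = nat.diagseq"
  have subseq: "strict_mono d"
    unfolding d_def using nat.subseq_diagseq by auto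
  have rat_cnv: "?P n d" for n
  proof -
    have Pn_seqseq: "?P n (nat.seqseq (Suc n))"
      by (rule nat.seqseq_holds)
    have 1: "(\<lambda>k. g ((nat.seqseq (Suc n) \<circ> (\<lambda>k. nat.fold_reduce (Suc n) k
      (Suc n + k))) k) (r n)) = (\<lambda>k. g (nat.seqseq (Suc n) k) (r n)) \<circ>
      (\<lambda>k. nat.fold_reduce (Suc n) k (Suc n + k))"
      by auto
    have 2: "?P n (d \<circ> ((+) (Suc n)))"
      unfolding d_def nat.diagseq_seqseq 1
      by (intro convergent_subseq_convergent Pn_seqseq nat.subseq_diagonal_rest)
    then obtain L where 3: "(\<lambda>na. g (d (na + Suc n)) (r n)) \<longlonglongrightarrow> L"
      by (auto simp: add.commute dest: convergentD)
    then have "(\<lambda>k. g (d k) (r n)) \<longlonglongrightarrow> L"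
      by (rule LIMSEQ_offset)
    then show ?thesis
      by (auto simp: convergent_def)
  qed
  define h where "h k = g (d k)" for k
  define Lq where "Lq q = lim (\<lambda>k. h k q)" for q
  have Lq: "(\<lambda>k. h k q) \<longlonglongrightarrow> Lq q" if qQ: "q \<in> \<rat>" for q
  proof -
    obtain n where "r n = q" using r_onto[OF qQ] by blast
    then show ?thesis using rat_cnv[of n] unfolding Lq_def h_def by (simp add: convergent_LIMSEQ_iff)
  qed
  have hadm: "adm (h k)" for k unfolding h_def by (rule g)
  have Lq_nonneg: "0 \<le> Lq q" if "q \<in> \<rat>" "0 \<le> q" for q
    using Lq[OF that(1)] hadm that(2) unfolding adm_def by (intro LIMSEQ_le_const) auto
  have Lq_anti: "Lq q2 \<le> Lq q1" if "q1 \<in> \<rat>" "q2 \<in> \<rat>" "0 \<le> q1" "q1 \<le> q2" for q1 q2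
    using Lq[OF that(2)] Lq[OF that(1)] hadm that(3,4) unfolding adm_def
    by (intro LIMSEQ_le) auto
  define f where "f t = (SUP q\<in>{q\<in>\<rat>. t < q \<and> 0 < q}. Lq q)" for t
  define fu where "fu t = (INF q\<in>{q\<in>\<rat>. 0 < q \<and> q < t}. Lq q)" for t
  have f_anti: "f b \<le> f a" if "a \<le> b" for a b
    unfolding f_def using that by (intro SUP_subset_mono) auto
  have ex_rat_gt: "\<exists>q\<in>\<rat>. t < q \<and> 0 < q" for t :: real
  proof -
    obtain q where "q \<in> \<rat>" "max t 0 < q" "q < max t 0 + 1"
      using Rats_dense_in_real[of "max t 0" "max t 0 + 1"] by auto
    then show ?thesis by auto
  qed
  have fadm: "adm f"
    unfolding adm_def
  proof (intro conjI allI impI)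
    fix t :: real assume "0 \<le> t"
    obtain q where q: "q \<in> \<rat>" "t < q" "0 < q" using ex_rat_gt[of t] by blast
    have "0 \<le> Lq q" using q Lq_nonneg by simp
    also have "Lq q \<le> f t" unfolding f_def using q by (intro SUP_upper) auto
    finally show "0 \<le> f t" .
  next
    fix a b :: real assume "0 \<le> a" "a \<le> b"
    then show "f b \<le> f a" using f_anti by blast
  qed
  have f_le_fu: "f t \<le> fu t" if "0 < t" for t
    unfolding f_def fu_def
  proof (intro SUP_least INF_greatest)
    fix q1 q2 assume "q1 \<in> {q \<in> \<rat>. t < q \<and> 0 < q}" "q2 \<in> {q \<in> \<rat>. 0 < q \<and> q < t}"
    then show "Lq q1 \<le> Lq q2" by (intro Lq_anti) auto
  qed
  define D where "D = {t. 0 < t \<and> f t < fu t}"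
  have D_count: "countable D"
  proof -
    have "\<exists>\<rho>\<in>\<rat>. f t < ereal \<rho> \<and> ereal \<rho> < fu t" if "t \<in> D" for t
    proof -
      from that have "f t < fu t" unfolding D_def by auto
      then obtain a where a: "f t < ereal a" "ereal a < fu t" using ereal_dense2 by blast
      then obtain b where b: "ereal a < ereal b" "ereal b < fu t" using ereal_dense2 by blast
      then obtain c where "c \<in> \<rat>" "a < c" "c < b" using Rats_dense_in_real[of a b] by auto
      moreover have "f t < ereal c" using less_trans[OF a(1), of "ereal c"] \<open>a < c\<close> by simp
      moreover have "ereal c < fu t" using less_trans[OF _ b(2), of "ereal c"] \<open>c < b\<close> by simp
      ultimately show ?thesis by blast
    qed
    then obtain \<rho> where \<rho>: "\<And>t. t \<in> D \<Longrightarrow> \<rho> t \<in> \<rat> \<and> f t < ereal (\<rho> t) \<and> ereal (\<rho> t) < fu t"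
      by metis
    have lt: "\<rho> t2 < \<rho> t1" if t1D: "t1 \<in> D" and t2D: "t2 \<in> D" and t12: "t1 < t2" for t1 t2
    proof -
      obtain q where q: "q \<in> \<rat>" "t1 < q" "q < t2" using Rats_dense_in_real[OF t12] by auto
      have t1: "0 < t1" using t1D unfolding D_def by auto
      have "ereal (\<rho> t2) < fu t2" using \<rho>[OF t2D] by simp
      also have "fu t2 \<le> Lq q" unfolding fu_def using q t1 by (intro INF_lower) auto
      also have "Lq q \<le> f t1" unfolding f_def using q t1 by (intro SUP_upper) auto
      also have "f t1 < ereal (\<rho> t1)" using \<rho>[OF t1D] by simp
      finally show ?thesis by simp
    qed
    have "inj_on \<rho> D"
    proof (rule inj_onI)
      fix t1 t2 assume "t1 \<in> D" "t2 \<in> D" "\<rho> t1 = \<rho> t2"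
      show "t1 = t2"
      proof (rule ccontr)
        assume "t1 \<noteq> t2"
        then have "t1 < t2 \<or> t2 < t1" by linarith
        then show False using lt[of t1 t2] lt[of t2 t1] \<open>t1 \<in> D\<close> \<open>t2 \<in> D\<close> \<open>\<rho> t1 = \<rho> t2\<close> by auto
      qed
    qed
    moreover have "countable (\<rho> ` D)"
      using \<rho> by (intro countable_subset[OF _ countable_rat]) auto
    ultimately show ?thesis using countable_image_inj_on by blast
  qed
  have f_borel: "(\<lambda>t. f \<bar>t\<bar>) \<in> borel_measurable borel"
  proof -
    have "f \<in> borel_measurable borel" by (rule antimono_borel) (rule f_anti)
    then show ?thesis by measurable
  qed
  define N1 where "N1 = {y::real \<times> 'a. fst y \<in> {0} \<union> D \<union> uminus ` D}"
  define N2 where "N2 = {y::real \<times> 'a. ereal (norm (snd y)) = f \<bar>fst y\<bar>}"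
  have N1: "N1 \<in> null_sets lborel" unfolding N1_def using D_count by (intro fst_null_sets) auto
  have N2: "N2 \<in> null_sets lborel" unfolding N2_def using sphere_null_sets[OF f_borel] by simp
  have good: "eventually (\<lambda>k. y \<in> (KS (h k) :: (real \<times> 'a) set) \<longleftrightarrow> y \<in> KS f) sequentially"
    if "y \<notin> N1 \<union> N2" for y :: "real \<times> 'a"
  proof -
    define t where "t = \<bar>fst y\<bar>"
    define n where "n = norm (snd y)"
    have t0: "0 < t" using that unfolding t_def N1_def by auto
    have tD: "t \<notin> D"
    proof
      assume "t \<in> D"
      moreover have "fst y = t \<or> fst y = - t" unfolding t_def by linarith
      ultimately have "fst y \<in> D \<union> uminus ` D" by (metis UnI1 UnI2 imageI)
      then show False using that unfolding N1_def by auto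
    qed
    have memKS: "y \<in> KS G \<longleftrightarrow> t \<le> 1/2 \<and> ereal n \<le> G t" for G
      unfolding KS_def t_def n_def by simp
    have ne: "ereal n \<noteq> f t" using that unfolding N2_def n_def t_def by auto
    show ?thesis
    proof (cases "ereal n < f t")
      case True
      then obtain q where q: "q \<in> \<rat>" "t < q" "0 < q" "ereal n < Lq q"
        unfolding f_def by (auto simp: less_SUP_iff)
      then have "eventually (\<lambda>k. ereal n < h k q) sequentially"
        using Lq[OF q(1)] by (simp add: order_tendsto_iff)
      then show ?thesis
      proof (rule eventually_mono)
        fix k assume "ereal n < h k q"
        moreover have "h k q \<le> h k t" using hadm[of k] q t0 unfolding adm_def by auto
        ultimately have "ereal n \<le> h k t" by simp
        then show "y \<in> KS (h k) \<longleftrightarrow> y \<in> KS f" using True unfolding memKS by (simp add: order_less_imp_le)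
      qed
    next
      case False
      with ne have "f t < ereal n" by simp
      moreover have "f t = fu t"
      proof -
        have "\<not> f t < fu t" using tD t0 unfolding D_def by simp
        then show ?thesis using f_le_fu[OF t0] by simp
      qed
      ultimately have "fu t < ereal n" by simp
      then obtain q where q: "q \<in> \<rat>" "0 < q" "q < t" "Lq q < ereal n"
        unfolding fu_def by (auto simp: INF_less_iff)
      then have "eventually (\<lambda>k. h k q < ereal n) sequentially"
        using Lq[OF q(1)] by (simp add: order_tendsto_iff)
      then show ?thesis
      proof (rule eventually_mono)
        fix k assume "h k q < ereal n"
        moreover have "h k t \<le> h k q" using hadm[of k] q t0 unfolding adm_def by auto
        ultimately have "h k t < ereal n" by simp
        then show "y \<in> KS (h k) \<longleftrightarrow> y \<in> KS f" using \<open>f t < ereal n\<close> unfolding memKS by (simp add: not_le[symmetric])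
      qed
    qed
  qed
  have "AE y in lborel. eventually (\<lambda>k. y \<in> (KS (h k) :: (real \<times> 'a) set) \<longleftrightarrow> y \<in> KS f) sequentially"
    by (rule AE_I'[OF null_sets.Un[OF N1 N2]]) (use good in auto)
  then show ?thesis using subseq fadm unfolding h_def by blast
qed



lemma liminf_evt_const:
  fixes X :: "nat \<Rightarrow> ennreal"
  assumes "eventually (\<lambda>k. X k = c) sequentially"
  shows "liminf X = c"
proof -
  have "liminf X = liminf (\<lambda>k. c)" by (rule Liminf_eq[OF assms])
  then show ?thesis by (simp add: Liminf_const)
qed

lemma fatou_sets:
  fixes A :: "nat \<Rightarrow> (real \<times> 'a::euclidean_space) set"
  assumes A: "\<And>k. A k \<in> sets borel" and B: "B \<in> sets borel"
    and ae: "AE y in lborel. eventually (\<lambda>k. y \<in> A k \<longleftrightarrow> y \<in> B) sequentially"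
  shows "emeasure lborel B \<le> liminf (\<lambda>k. emeasure lborel (A k))"
proof -
  have "emeasure lborel B = (\<integral>\<^sup>+ y. indicator B y \<partial>lborel)" using B by simp
  also have "\<dots> \<le> (\<integral>\<^sup>+ y. liminf (\<lambda>k. indicator (A k) y) \<partial>lborel)"
  proof (rule nn_integral_mono_AE)
    show "AE y in lborel. indicator B y \<le> liminf (\<lambda>k. indicator (A k) y :: ennreal)"
      using ae
    proof (rule eventually_mono)
      fix y assume "eventually (\<lambda>k. y \<in> A k \<longleftrightarrow> y \<in> B) sequentially"
      then have "eventually (\<lambda>k. indicator (A k) y = (indicator B y :: ennreal)) sequentially"
        by (rule eventually_mono) (simp add: indicator_def)
      then show "indicator B y \<le> liminf (\<lambda>k. indicator (A k) y :: ennreal)"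
        by (simp add: liminf_evt_const)
    qed
  qed
  also have "\<dots> \<le> liminf (\<lambda>k. \<integral>\<^sup>+ y. indicator (A k) y \<partial>lborel)"
    by (rule nn_integral_liminf) (use A in simp)
  also have "\<dots> = liminf (\<lambda>k. emeasure lborel (A k))" using A by simp
  finally show ?thesis .
qed

lemma fatou_PS:
  fixes A :: "nat \<Rightarrow> (real \<times> 'a::euclidean_space) set"
  assumes A: "\<And>k. A k \<in> sets borel" and B: "B \<in> sets borel"
    and ae: "AE y in lborel. eventually (\<lambda>k. y \<in> A k \<longleftrightarrow> y \<in> B) sequentially"
  shows "PS s B \<le> liminf (\<lambda>k. PS s (A k))"
proof -
  define J where "J E y = (\<integral>\<^sup>+ x. indicator (strip - E) x * kernel s (x - y) \<partial>lborel)" for E :: "(real \<times> 'a) set" and y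
  have PSJ: "PS s E = (\<integral>\<^sup>+ y. indicator (E \<inter> strip) y * J E y \<partial>lborel)" for E :: "(real \<times> 'a) set"
    unfolding PS_lborel J_def ..
  have J1: "J B y \<le> liminf (\<lambda>k. J (A k) y)" for y :: "real \<times> 'a"
  proof -
    have "J B y \<le> (\<integral>\<^sup>+ x. liminf (\<lambda>k. indicator (strip - A k) x * kernel s (x - y)) \<partial>lborel)"
      unfolding J_def
    proof (rule nn_integral_mono_AE)
      show "AE x in lborel. indicator (strip - B) x * kernel s (x - y) \<le> liminf (\<lambda>k. indicator (strip - A k) x * kernel s (x - y))"
        using ae
      proof (rule eventually_mono)
        fix x assume "eventually (\<lambda>k. x \<in> A k \<longleftrightarrow> x \<in> B) sequentially"
        then have "eventually (\<lambda>k. indicator (strip - A k) x * kernel s (x - y) = indicator (strip - B) x * kernel s (x - y)) sequentially"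
          by (rule eventually_mono) (simp add: indicator_def)
        then show "indicator (strip - B) x * kernel s (x - y) \<le> liminf (\<lambda>k. indicator (strip - A k) x * kernel s (x - y))"
          by (simp add: liminf_evt_const)
      qed
    qed
    also have "\<dots> \<le> liminf (\<lambda>k. J (A k) y)"
      unfolding J_def
    proof (rule nn_integral_liminf)
      fix k
      have [measurable]: "A k \<in> sets borel" by (rule A)
      show "(\<lambda>x. indicator (strip - A k) x * kernel s (x - y)) \<in> borel_measurable lborel"
        by measurable
    qed
    finally show ?thesis .
  qed
  have "PS s B \<le> (\<integral>\<^sup>+ y. liminf (\<lambda>k. indicator (A k \<inter> strip) y * J (A k) y) \<partial>lborel)"
    unfolding PSJ
  proof (rule nn_integral_mono_AE)
    show "AE y in lborel. indicator (B \<inter> strip) y * J B y \<le> liminf (\<lambda>k. indicator (A k \<inter> strip) y * J (A k) y)"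
      using ae
    proof (rule eventually_mono)
      fix y assume ev: "eventually (\<lambda>k. y \<in> A k \<longleftrightarrow> y \<in> B) sequentially"
      show "indicator (B \<inter> strip) y * J B y \<le> liminf (\<lambda>k. indicator (A k \<inter> strip) y * J (A k) y)"
      proof (cases "y \<in> B \<inter> strip")
        case True
        have "eventually (\<lambda>k. indicator (A k \<inter> strip) y * J (A k) y = J (A k) y) sequentially"
          using ev by (rule eventually_mono) (use True in \<open>simp add: indicator_def\<close>)
        then have "liminf (\<lambda>k. indicator (A k \<inter> strip) y * J (A k) y) = liminf (\<lambda>k. J (A k) y)"
          by (rule Liminf_eq)
        then show ?thesis using True J1[of y] by simp
      qed simp
    qed
  qed
  also have "\<dots> \<le> liminf (\<lambda>k. PS s (A k))"
    unfolding PSJ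
  proof (rule nn_integral_liminf)
    fix k
    have [measurable]: "A k \<in> sets borel" by (rule A)
    have [measurable]: "J (A k) \<in> borel_measurable borel"
      unfolding J_def by (rule inner_borel) measurable
    show "(\<lambda>y. indicator (A k \<inter> strip) y * J (A k) y) \<in> borel_measurable lborel"
      by measurable
  qed
  finally show ?thesis .
qed



lemma const_eq:
  fixes L s :: real and d :: nat and V :: real
  assumes L: "L > 0"
  shows "(6*L) powr (-(real d + 1 + s)) * (L * (V * (L/2)^d))
         = (6 powr (-(real d + 1 + s)) * V / 2^d) * L powr (-s)"
proof -
  have "(6*L) powr (-(real d + 1 + s)) = 6 powr (-(real d + 1 + s)) * L powr (-(real d + 1 + s))"
    using L by (simp add: powr_mult)
  moreover have "L * (L/2)^d = L powr (real d + 1) / 2^d"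
    using L by (simp add: powr_add powr_realpow power_divide)
  moreover have "L powr (-(real d + 1 + s)) * L powr (real d + 1) = L powr (-s)"
    using L by (simp add: powr_add[symmetric])
  ultimately show ?thesis
    by (simp add: field_simps) (metis (no_types, lifting) mult.assoc mult.commute)
qed



lemma emeasure_fin_real:
  assumes "emeasure lborel A \<le> ennreal c"
  shows "emeasure lborel A = ennreal (measure lborel A)"
  using assms by (intro emeasure_eq_ennreal_measure) (auto simp: top_unique)

lemma tight_limit:
  fixes g :: "nat \<Rightarrow> real \<Rightarrow> ereal" and f :: "real \<Rightarrow> ereal"
  assumes g: "\<And>k. adm (g k)" and f: "adm f" and s: "0 < s" and mu: "0 < \<mu>" and e: "0 < \<epsilon>"
    and meas: "\<And>k. emeasure lborel (KS (g k) :: (real \<times> 'a::euclidean_space) set) = ennreal \<mu>"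
    and PSb: "\<And>k. PS s (KS (g k) :: (real \<times> 'a) set) \<le> ennreal M"
    and ae: "AE y in lborel. eventually (\<lambda>k. y \<in> (KS (g k) :: (real \<times> 'a) set) \<longleftrightarrow> y \<in> KS f) sequentially"
  shows "ennreal (\<mu> - \<epsilon>) \<le> emeasure lborel (KS f :: (real \<times> 'a) set)"
proof -
  define d where "d = DIM('a)"
  define V where "V = unit_ball_vol (real d)"
  have V: "V > 0" unfolding V_def by simp
  define c0 where "c0 = 6 powr (-(real d + 1 + s)) * V / 2^d"
  have c0: "c0 > 0" unfolding c0_def using V by simp
  define M' where "M' = max M 0 + 1"
  have M': "M' > 0" "M \<le> M'" unfolding M'_def by auto
  define L where "L = min (1/4) ((\<epsilon> * c0 / M') powr (1/s))"
  have L: "0 < L" "L \<le> 1/4" unfolding L_def using e c0 M' by auto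
  have Ls: "L powr s \<le> \<epsilon> * c0 / M'"
  proof -
    have "L powr s \<le> ((\<epsilon> * c0 / M') powr (1/s)) powr s"
      using L s unfolding L_def by (intro powr_mono2) auto
    also have "\<dots> = \<epsilon> * c0 / M'" using s e c0 M' by (simp add: powr_powr)
    finally show ?thesis .
  qed
  define R where "R = root d (\<mu> / (2*V*L))"
  have d0: "d > 0" unfolding d_def by simp
  have R: "R > 0" unfolding R_def using mu V L d0 by simp
  have Rd: "R^d = \<mu> / (2*V*L)" unfolding R_def using mu V L d0 by simp
  have mu_eq: "2*L*V*R^d = \<mu>" using Rd V L by (simp add: field_simps)
  define cL where "cL = (6*L) powr (-(dimn TYPE('a) + s)) * (L * (V * (L/2)^d))"
  have cL_eq: "cL = c0 * L powr (-s)"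
    unfolding cL_def c0_def dimn_def d_def using const_eq[OF L(1), of "DIM('a)" s V] by (simp add: add.assoc)
  have cL: "cL > 0" using c0 L by (simp add: cL_eq)
  have measle: "emeasure lborel (KS (g k) :: (real \<times> 'a) set) \<le> ennreal (2*L*unit_ball_vol (real DIM('a))*R^DIM('a))" for k
    using meas[of k] mu_eq unfolding V_def d_def by simp
  have Kb: "(KS h :: (real \<times> 'a) set) \<in> sets lborel" if "adm h" for h
    using KS_borel[OF that] by simp
  have Rb: "{y::real \<times> 'a. R < norm (snd y)} \<in> sets lborel"
  proof -
    have "{y\<in>space (borel \<Otimes>\<^sub>M borel). R < norm (snd y :: 'a) \<and> fst y \<in> (UNIV::real set)} \<in> sets (borel \<Otimes>\<^sub>M borel)"
      by measurable
    then show ?thesis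
      by (metis (no_types, lifting) borel_prod sets_lborel space_borel UNIV_I Collect_cong space_pair_measure UNIV_Times_UNIV)
  qed
  define Cyl where "Cyl = {-1/2..1/2::real} \<times> cball (0::'a) R"
  have Cb: "Cyl \<in> sets lborel"
  proof -
    have "Cyl \<in> sets (borel \<Otimes>\<^sub>M borel)" unfolding Cyl_def by (intro pair_measureI) auto
    then show ?thesis by (metis borel_prod sets_lborel)
  qed
  define W where "W = V * R^d"
  have eW: "emeasure lborel Cyl = ennreal W"
    unfolding Cyl_def W_def V_def d_def using R by (subst emeasure_times) (auto simp: emeasure_cball)
  have mW: "measure lborel Cyl = W" using eW V R unfolding W_def by (simp add: measure_def)
  define T where "T k = (KS (g k) :: (real \<times> 'a) set) \<inter> {y. R < norm (snd y)}" for k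
  define B where "B k = (KS (g k) :: (real \<times> 'a) set) \<inter> Cyl" for k
  define D where "D k = Cyl - (KS (g k) :: (real \<times> 'a) set)" for k
  have Tb: "T k \<in> sets lborel" for k unfolding T_def using Kb[OF g] Rb by auto
  have Bb: "B k \<in> sets lborel" for k unfolding B_def using Kb[OF g] Cb by auto
  have Db: "D k \<in> sets lborel" for k unfolding D_def using Kb[OF g] Cb by auto
  have T_fin: "emeasure lborel (T k) = ennreal (measure lborel (T k))" for k
    by (rule emeasure_fin_real[of _ \<mu>]) (metis T_def meas emeasure_mono Kb[OF g] Int_lower1)
  have B_fin: "emeasure lborel (B k) = ennreal (measure lborel (B k))" for k
    by (rule emeasure_fin_real[of _ \<mu>]) (metis B_def meas emeasure_mono Kb[OF g] Int_lower1)
  have D_fin: "emeasure lborel (D k) = ennreal (measure lborel (D k))" for k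
    by (rule emeasure_fin_real[of _ W]) (metis D_def eW emeasure_mono Cb Diff_subset)
  have tail: "measure lborel (T k) \<le> \<epsilon>" for k
  proof -
    have "ennreal cL * emeasure lborel (T k) \<le> PS s (KS (g k) :: (real \<times> 'a) set)"
      using PS_tail[OF g R L s measle[of k]] unfolding cL_def T_def V_def d_def by simp
    also have "\<dots> \<le> ennreal M'" using PSb[of k] M' by (meson ennreal_leI order_trans)
    finally have "ennreal (cL * measure lborel (T k)) \<le> ennreal M'"
      using cL by (simp add: T_fin ennreal_mult)
    then have "cL * measure lborel (T k) \<le> M'" using M' by (simp add: ennreal_le_iff)
    then have "measure lborel (T k) \<le> M' / cL" using cL by (simp add: field_simps)
    also have "M' / cL = M' * L powr s / c0" using L c0 by (simp add: cL_eq powr_minus field_simps)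
    also have "\<dots> \<le> \<epsilon>" using Ls M' c0 by (simp add: field_simps)
    finally show ?thesis .
  qed
  have split1: "measure lborel (B k) + measure lborel (T k) = \<mu>" for k
  proof -
    have "KS (g k) = B k \<union> T k" unfolding B_def T_def Cyl_def KS_def by (auto simp: abs_le_iff)
    moreover have "B k \<inter> T k = {}" unfolding B_def T_def Cyl_def by auto
    ultimately have "measure lborel (KS (g k) :: (real \<times> 'a) set) = measure lborel (B k) + measure lborel (T k)"
      using Bb Tb B_fin T_fin by (simp add: measure_Union)
    moreover have "measure lborel (KS (g k) :: (real \<times> 'a) set) = \<mu>" using meas[of k] mu by (simp add: measure_def)
    ultimately show ?thesis by simp
  qed
  have split2: "measure lborel (B k) + measure lborel (D k) = W" for k
  proof -
    have "Cyl = B k \<union> D k" unfolding B_def D_def by auto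
    moreover have "B k \<inter> D k = {}" unfolding B_def D_def by auto
    ultimately have "measure lborel Cyl = measure lborel (B k) + measure lborel (D k)"
      using Bb Db B_fin D_fin by (simp add: measure_Union)
    then show ?thesis using mW by simp
  qed
  have Dk: "measure lborel (D k) \<le> W - \<mu> + \<epsilon>" for k using split1[of k] split2[of k] tail[of k] by linarith
  have nn: "0 \<le> W - \<mu> + \<epsilon>" using Dk[of 0] measure_nonneg[of lborel "D 0"] by linarith
  define DF where "DF = Cyl - (KS f :: (real \<times> 'a) set)"
  define E where "E = (KS f :: (real \<times> 'a) set) \<inter> Cyl"
  have DFb: "DF \<in> sets lborel" unfolding DF_def using Kb[OF f] Cb by auto
  have Eb: "E \<in> sets lborel" unfolding E_def using Kb[OF f] Cb by auto
  have "emeasure lborel DF \<le> liminf (\<lambda>k. emeasure lborel (D k))"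
  proof (rule fatou_sets)
    show "D k \<in> sets borel" for k using Db[of k] by simp
    show "DF \<in> sets borel" using DFb by simp
    show "AE y in lborel. \<forall>\<^sub>F k in sequentially. (y \<in> D k) = (y \<in> DF)"
      using ae by (rule eventually_mono) (auto elim!: eventually_mono simp: D_def DF_def)
  qed
  also have "\<dots> \<le> limsup (\<lambda>k. emeasure lborel (D k))" by (rule Liminf_le_Limsup) simp
  also have "\<dots> \<le> ennreal (W - \<mu> + \<epsilon>)"
    by (rule Limsup_bounded) (use Dk in \<open>simp add: D_fin ennreal_leI\<close>)
  finally have eDF: "emeasure lborel DF \<le> ennreal (W - \<mu> + \<epsilon>)" .
  have DF_fin: "emeasure lborel DF = ennreal (measure lborel DF)"
    by (rule emeasure_fin_real[OF eDF])
  have E_fin: "emeasure lborel E = ennreal (measure lborel E)"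
    by (rule emeasure_fin_real[of _ W]) (metis E_def eW emeasure_mono Cb Int_lower2)
  have mDF: "measure lborel DF \<le> W - \<mu> + \<epsilon>" using eDF DF_fin nn by (simp add: ennreal_le_iff)
  have "Cyl = E \<union> DF" unfolding E_def DF_def by auto
  moreover have "E \<inter> DF = {}" unfolding E_def DF_def by auto
  ultimately have "measure lborel Cyl = measure lborel E + measure lborel DF"
    using Eb DFb E_fin DF_fin by (simp add: measure_Union)
  then have mE: "\<mu> - \<epsilon> \<le> measure lborel E" using mW mDF by linarith
  have "ennreal (\<mu> - \<epsilon>) \<le> emeasure lborel E" unfolding E_fin using mE by (rule ennreal_leI)
  also have "\<dots> \<le> emeasure lborel (KS f :: (real \<times> 'a) set)"
    by (rule emeasure_mono) (use Kb[OF f] in \<open>auto simp: E_def\<close>)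
  finally show ?thesis .
qed



theorem theorem1p1:
  fixes s \<mu> :: real
  assumes "0 < s" and "s < 1" and "0 < \<mu>"
  shows "\<exists>Fs \<in> (classK :: (real \<times> 'a::euclidean_space) set set).
           emeasure lebesgue Fs = ennreal \<mu> \<and>
           (\<forall>F \<in> (classK :: (real \<times> 'a) set set). emeasure lebesgue F = ennreal \<mu> \<longrightarrow> PS s Fs \<le> PS s F)"
proof -
  note s = assms(1) and mu = assms(3)
  have leb: "emeasure lebesgue (KS h :: (real \<times> 'a) set) = emeasure lborel (KS h :: (real \<times> 'a) set)" if "adm h" for h
    using KS_borel[OF that, where 'a='a] by simp
  define Adm where "Adm = {F \<in> (classK :: (real \<times> 'a) set set). emeasure lebesgue F = ennreal \<mu>}"
  define m where "m = (INF F\<in>Adm. PS s F)"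
  define V where "V = unit_ball_vol (real DIM('a))"
  have V: "V > 0" unfolding V_def by simp
  define \<rho> where "\<rho> = root DIM('a) (\<mu> / V)"
  have \<rho>: "\<rho> \<ge> 0" "\<rho> ^ DIM('a) = \<mu> / V" unfolding \<rho>_def using V mu by auto
  define h0 where "h0 = (\<lambda>_::real. ereal \<rho>)"
  have h0: "adm h0" unfolding adm_def h0_def using \<rho> by auto
  have "(KS h0 :: (real \<times> 'a) set) = {-1/2..1/2} \<times> cball 0 \<rho>"
  proof (rule set_eqI)
    fix x :: "real \<times> 'a"
    show "x \<in> KS h0 \<longleftrightarrow> x \<in> {-1/2..1/2} \<times> cball 0 \<rho>"
      by (cases x) (simp add: KS_def h0_def, arith)
  qed
  then have "emeasure lborel (KS h0 :: (real \<times> 'a) set) = ennreal 1 * ennreal (V * \<rho> ^ DIM('a))"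
    using \<rho> by (simp add: emeasure_times emeasure_cball V_def)
  also have "\<dots> = ennreal \<mu>" using \<rho> V by simp
  finally have C0: "(KS h0 :: (real \<times> 'a) set) \<in> Adm"
    unfolding Adm_def using KS_classK[OF h0] leb[OF h0] by simp
  have main: "\<exists>Fs\<in>Adm. PS s Fs \<le> m"
  proof (cases "m = top")
    case True
    then show ?thesis using C0 by (intro bexI[of _ "KS h0"]) simp_all
  next
    case False
    have ex: "\<exists>F\<in>Adm. PS s F < m + ennreal (1 / real (Suc k))" for k
    proof -
      have "m + 0 < m + ennreal (1 / real (Suc k))"
        using False by (subst ennreal_add_left_cancel_less) auto
      then show ?thesis unfolding m_def by (simp add: INF_less_iff)
    qed
    obtain G where G: "\<And>k. G k \<in> Adm" "\<And>k. PS s (G k) < m + ennreal (1 / real (Suc k))"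
    proof -
      have "\<forall>k. \<exists>F. F \<in> Adm \<and> PS s F < m + ennreal (1 / real (Suc k))" using ex by blast
      then obtain G where "\<forall>k. G k \<in> Adm \<and> PS s (G k) < m + ennreal (1 / real (Suc k))"
        by (rule choice[THEN exE])
      then show ?thesis using that by blast
    qed
    have "\<exists>h. adm h \<and> G k = KS h" for k
      using classK_KS[of "G k"] G(1)[of k] unfolding Adm_def by blast
    then have "\<forall>k. \<exists>h. adm h \<and> G k = KS h" by blast
    then obtain g where "\<forall>k. adm (g k) \<and> G k = KS (g k)" by (rule choice[THEN exE])
    then have g: "\<And>k. adm (g k)" "\<And>k. G k = KS (g k)" by auto
    have "\<exists>\<sigma> f. strict_mono \<sigma> \<and> adm f \<and> (AE y in lborel. eventually (\<lambda>k. y \<in> (KS (g (\<sigma> k)) :: (real \<times> 'a) set) \<longleftrightarrow> y \<in> KS f) sequentially)"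
      by (rule compact_adm) (rule g(1))
    then obtain \<sigma> f where sfa:
      "strict_mono \<sigma> \<and> adm f \<and> (AE y in lborel. eventually (\<lambda>k. y \<in> (KS (g (\<sigma> k)) :: (real \<times> 'a) set) \<longleftrightarrow> y \<in> KS f) sequentially)"
      by (elim exE)
    have \<sigma>: "strict_mono \<sigma>" using sfa by (rule conjunct1)
    have f: "adm f" using sfa by (elim conjE)
    have ae: "AE y in lborel. eventually (\<lambda>k. y \<in> (KS (g (\<sigma> k)) :: (real \<times> 'a) set) \<longleftrightarrow> y \<in> KS f) sequentially"
      using sfa by (elim conjE)
    define h where "h k = g (\<sigma> k)" for k
    have hadm: "adm (h k)" for k unfolding h_def by (rule g)
    have hK: "(KS (h k) :: (real \<times> 'a) set) = G (\<sigma> k)" for k unfolding h_def using g(2) by simp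
    have meas: "emeasure lborel (KS (h k) :: (real \<times> 'a) set) = ennreal \<mu>" for k
      using G(1)[of "\<sigma> k"] leb[OF hadm[of k]] unfolding hK Adm_def by simp
    have lower: "m \<le> PS s (KS (h k) :: (real \<times> 'a) set)" for k
      unfolding m_def hK using G(1) by (rule INF_lower)
    have upper: "PS s (KS (h k) :: (real \<times> 'a) set) \<le> m + ennreal (1 / real (Suc (\<sigma> k)))" for k
      unfolding hK using G(2)[of "\<sigma> k"] by simp
    have lim0: "(\<lambda>k. 1 / real (Suc (\<sigma> k))) \<longlonglongrightarrow> 0"
    proof -
      have "(\<lambda>n. 1 / real (Suc n)) \<longlonglongrightarrow> 0"
        using LIMSEQ_inverse_real_of_nat by (simp add: inverse_eq_divide)
      from LIMSEQ_subseq_LIMSEQ[OF this \<sigma>] show ?thesis by (simp add: comp_def)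
    qed
    have "(\<lambda>k. m + ennreal (1 / real (Suc (\<sigma> k)))) \<longlonglongrightarrow> m + ennreal 0"
      by (intro tendsto_add tendsto_const tendsto_ennrealI lim0)
    then have limup: "(\<lambda>k. m + ennreal (1 / real (Suc (\<sigma> k)))) \<longlonglongrightarrow> m" by simp
    have ev1: "eventually (\<lambda>k. m \<le> PS s (KS (h k) :: (real \<times> 'a) set)) sequentially"
      using lower by (intro always_eventually) blast
    have ev2: "eventually (\<lambda>k. PS s (KS (h k) :: (real \<times> 'a) set) \<le> m + ennreal (1 / real (Suc (\<sigma> k)))) sequentially"
      using upper by (intro always_eventually) blast
    have "(\<lambda>k. PS s (KS (h k) :: (real \<times> 'a) set)) \<longlonglongrightarrow> m"
      by (rule tendsto_sandwich[OF ev1 ev2 tendsto_const limup])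
    then have liminfm: "liminf (\<lambda>k. PS s (KS (h k) :: (real \<times> 'a) set)) = m"
      by (intro lim_imp_Liminf) auto
    have aeh: "AE y in lborel. eventually (\<lambda>k. y \<in> (KS (h k) :: (real \<times> 'a) set) \<longleftrightarrow> y \<in> KS f) sequentially"
      using ae unfolding h_def .
    have PSf: "PS s (KS f :: (real \<times> 'a) set) \<le> m"
      using fatou_PS[OF KS_borel[OF hadm] KS_borel[OF f] aeh, of s] liminfm by simp
    have "emeasure lborel (KS f :: (real \<times> 'a) set) \<le> liminf (\<lambda>k. emeasure lborel (KS (h k) :: (real \<times> 'a) set))"
      by (rule fatou_sets[OF KS_borel[OF hadm] KS_borel[OF f] aeh])
    then have up: "emeasure lborel (KS f :: (real \<times> 'a) set) \<le> ennreal \<mu>"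
      by (simp add: meas Liminf_const)
    define M where "M = enn2real m + 1"
    have PSb: "PS s (KS (h k) :: (real \<times> 'a) set) \<le> ennreal M" for k
    proof -
      have "PS s (KS (h k) :: (real \<times> 'a) set) \<le> m + ennreal (1 / real (Suc (\<sigma> k)))" by (rule upper)
      also have "\<dots> \<le> m + ennreal 1" by (intro add_left_mono ennreal_leI) auto
      also have "\<dots> = ennreal M" unfolding M_def using False
        by (simp add: ennreal_plus[symmetric] ennreal_enn2real_if less_top)
      finally show ?thesis .
    qed
    have low: "ennreal (\<mu> - \<epsilon>) \<le> emeasure lborel (KS f :: (real \<times> 'a) set)" if "\<epsilon> > 0" for \<epsilon>
      by (rule tight_limit[OF hadm f s mu that meas PSb aeh])
    have fin: "emeasure lborel (KS f :: (real \<times> 'a) set) = ennreal (measure lborel (KS f :: (real \<times> 'a) set))"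
      by (rule emeasure_fin_real[OF up])
    have x1: "measure lborel (KS f :: (real \<times> 'a) set) \<le> \<mu>" using up fin mu by (simp add: ennreal_le_iff)
    have x2: "\<mu> \<le> measure lborel (KS f :: (real \<times> 'a) set)"
    proof (rule ccontr)
      define x where "x = measure lborel (KS f :: (real \<times> 'a) set)"
      assume "\<not> \<mu> \<le> measure lborel (KS f :: (real \<times> 'a) set)"
      then have lt: "x < \<mu>" unfolding x_def by simp
      define \<epsilon> where "\<epsilon> = (\<mu> - x) / 2"
      have e: "\<epsilon> > 0" unfolding \<epsilon>_def using lt by simp
      have "ennreal (\<mu> - \<epsilon>) \<le> ennreal x" using low[OF e] fin unfolding x_def by simp
      moreover have x0: "0 \<le> x" unfolding x_def by simp
      ultimately have "\<mu> - \<epsilon> \<le> x"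
        using e lt mu by (auto simp: ennreal_le_iff2 \<epsilon>_def)
      then have "\<mu> \<le> x" unfolding \<epsilon>_def by (simp add: field_simps)
      then show False using lt by simp
    qed
    have "emeasure lborel (KS f :: (real \<times> 'a) set) = ennreal \<mu>" using fin x1 x2 by simp
    then have "(KS f :: (real \<times> 'a) set) \<in> Adm"
      unfolding Adm_def using KS_classK[OF f] leb[OF f] by simp
    then show ?thesis using PSf by blast
  qed
  then obtain Fs where Fs: "Fs \<in> Adm" "PS s Fs \<le> m" by blast
  show ?thesis
  proof (intro bexI conjI ballI impI)
    show "Fs \<in> classK" "emeasure lebesgue Fs = ennreal \<mu>" using Fs unfolding Adm_def by auto
    fix F :: "(real \<times> 'a) set" assume "F \<in> classK" "emeasure lebesgue F = ennreal \<mu>"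
    then have "F \<in> Adm" unfolding Adm_def by simp
    then have "m \<le> PS s F" unfolding m_def by (rule INF_lower)
    then show "PS s Fs \<le> PS s F" using Fs by simp
  qed
qed

end
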